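(* For all integers $r \geq 3$ and $k \geq 3$, we have $s_r(K_k) \geq s_{r-1}(K_k)$.
   Context: All graphs are finite and simple. For graphs $G,H$ and an integer $r\ge 1$, write $G \rightarrow (H)_r$ if every colouring of the edges of $G$ with $r$ colours contains a monochromatic copy of $H$. A graph $G$ is $r$-Ramsey-minimal for $H$ if $G \rightarrow (H)_r$ but no proper subgraph $G'\subsetneq G$ satisfies $G' \rightarrow (H)_r$. Define $s_r(H) := \min \delta(G)$ over all graphs $G$ that are $r$-Ramsey-minimal for $H$, where $\delta$ denotes minimum degree. *)

theory Defs
  imports Main
begin

text \<open>A finite simple graph on natural-number vertices: a pair (V, E) with V finite and
E a set of 2-element subsets of V. Every finite graph is isomorphic to such a graph,
so the minimum in s_r ranges over all graphs up to isomorphism.\<close>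

type_synonym graph = "nat set \<times> nat set set"

definition verts :: "graph \<Rightarrow> nat set" where "verts G = fst G"
definition edges :: "graph \<Rightarrow> nat set set" where "edges G = snd G"

definition is_graph :: "graph \<Rightarrow> bool" where
  "is_graph G \<longleftrightarrow> finite (verts G) \<and> (\<forall>e\<in>edges G. card e = 2 \<and> e \<subseteq> verts G)"

definition subgraph :: "graph \<Rightarrow> graph \<Rightarrow> bool" where
  "subgraph G' G \<longleftrightarrow> is_graph G' \<and> verts G' \<subseteq> verts G \<and> edges G' \<subseteq> edges G"

definition degree :: "graph \<Rightarrow> nat \<Rightarrow> nat" where
  "degree G v = card {e \<in> edges G. v \<in> e}"

definition min_degree :: "graph \<Rightarrow> nat" where
  "min_degree G = Min (degree G ` verts G)"

definition complete_graph :: "nat \<Rightarrow> graph" where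
  "complete_graph k = ({0..<k}, {e. e \<subseteq> {0..<k} \<and> card e = 2})"

definition mono_copy :: "graph \<Rightarrow> graph \<Rightarrow> (nat set \<Rightarrow> nat) \<Rightarrow> nat \<Rightarrow> bool" where
  "mono_copy H G c i \<longleftrightarrow> (\<exists>f. inj_on f (verts H) \<and> f ` verts H \<subseteq> verts G \<and>
      (\<forall>e\<in>edges H. f ` e \<in> edges G \<and> c (f ` e) = i))"

definition arrows :: "graph \<Rightarrow> graph \<Rightarrow> nat \<Rightarrow> bool" where
  "arrows G H r \<longleftrightarrow> (\<forall>c. (\<forall>e\<in>edges G. c e < r) \<longrightarrow> (\<exists>i<r. mono_copy H G c i))"

definition ramsey_minimal :: "nat \<Rightarrow> graph \<Rightarrow> graph \<Rightarrow> bool" where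
  "ramsey_minimal r H G \<longleftrightarrow> is_graph G \<and> arrows G H r \<and>
     (\<forall>G'. subgraph G' G \<and> G' \<noteq> G \<longrightarrow> \<not> arrows G' H r)"

definition s_r :: "nat \<Rightarrow> graph \<Rightarrow> nat" where
  "s_r r H = (LEAST d. d \<in> min_degree ` {G. ramsey_minimal r H G})"

end

theory Submission
  imports Defs "HOL-Library.Ramsey"
begin

definition del_vertex :: "graph \<Rightarrow> nat \<Rightarrow> graph" where
  "del_vertex G v = (verts G - {v}, {e\<in>edges G. v \<notin> e})"

lemma finite_edges: "is_graph G \<Longrightarrow> finite (edges G)"
proof -
  assume a: "is_graph G"
  then have "edges G \<subseteq> Pow (verts G)" by (auto simp: is_graph_def)
  moreover have "finite (Pow (verts G))" using a by (simp add: is_graph_def)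
  ultimately show ?thesis by (rule finite_subset)
qed

lemma del_vertex_graph: "is_graph G \<Longrightarrow> is_graph (del_vertex G v)"
  unfolding is_graph_def del_vertex_def verts_def edges_def by auto

lemma del_vertex_sub: "is_graph G \<Longrightarrow> subgraph (del_vertex G v) G"
  unfolding subgraph_def using del_vertex_graph
  by (auto simp: del_vertex_def verts_def edges_def)

lemma del_vertex_neq: "v \<in> verts G \<Longrightarrow> del_vertex G v \<noteq> G"
proof
  assume v: "v \<in> verts G" and eq: "del_vertex G v = G"
  have "v \<notin> verts (del_vertex G v)" by (simp add: del_vertex_def verts_def)
  then show False using v eq by simp
qed

lemma edge_sub: "is_graph G \<Longrightarrow> e \<in> edges G \<Longrightarrow> e \<subseteq> verts G"
  by (simp add: is_graph_def)

lemma edge_card: "is_graph G \<Longrightarrow> e \<in> edges G \<Longrightarrow> card e = 2"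
  by (simp add: is_graph_def)

lemma vK: "verts (complete_graph k) = {0..<k}"
  by (simp add: complete_graph_def verts_def)

lemma eK: "e \<in> edges (complete_graph k) \<longleftrightarrow> e \<subseteq> {0..<k} \<and> card e = 2"
  by (simp add: complete_graph_def edges_def)

lemma mono_transfer:
  assumes "mono_copy (complete_graph k) G c i" "k \<ge> 2" "is_graph G2"
    "\<forall>e\<in>edges G. c e = i \<longrightarrow> e \<in> edges G2 \<and> c2 e = j"
  shows "mono_copy (complete_graph k) G2 c2 j"
proof -
  from assms(1) obtain f where f1: "inj_on f (verts (complete_graph k))"
    and f2: "\<forall>e\<in>edges (complete_graph k). f ` e \<in> edges G \<and> c (f ` e) = i"
    unfolding mono_copy_def by blast
  have E: "\<forall>e\<in>edges (complete_graph k). f ` e \<in> edges G2 \<and> c2 (f ` e) = j"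
  proof
    fix e assume "e \<in> edges (complete_graph k)"
    then have "f ` e \<in> edges G" "c (f ` e) = i" using f2 by auto
    then show "f ` e \<in> edges G2 \<and> c2 (f ` e) = j" using assms(4) by blast
  qed
  have "f ` verts (complete_graph k) \<subseteq> verts G2"
  proof
    fix y assume "y \<in> f ` verts (complete_graph k)"
    then obtain x where x: "x < k" "y = f x" by (auto simp: vK)
    define z where "z = (if x = 0 then 1 else (0::nat))"
    have xz: "x \<noteq> z" by (simp add: z_def)
    have zk: "z < k" using assms(2) by (simp add: z_def)
    have "{x, z} \<subseteq> {0..<k}" using x zk by auto
    moreover have "card {x, z} = 2" using xz by simp
    ultimately have "{x, z} \<in> edges (complete_graph k)" by (simp add: eK)
    then have "f ` {x, z} \<in> edges G2" using E by blast
    then have "f ` {x,z} \<subseteq> verts G2" using assms(3) by (rule edge_sub[rotated])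
    moreover have "y \<in> f ` {x,z}" using x by simp
    ultimately show "y \<in> verts G2" by (rule subsetD)
  qed
  then show ?thesis unfolding mono_copy_def using f1 E by blast
qed

lemma subgraph_refl: "is_graph G \<Longrightarrow> subgraph G G"
  by (simp add: subgraph_def)

lemma subgraph_trans: "subgraph A B \<Longrightarrow> subgraph B C \<Longrightarrow> subgraph A C"
  unfolding subgraph_def by auto

lemma min_exists:
  "is_graph G \<Longrightarrow> arrows G H r \<Longrightarrow> \<exists>G'. subgraph G' G \<and> ramsey_minimal r H G'"
proof (induction "card (verts G) + card (edges G)" arbitrary: G rule: less_induct)
  case less
  show ?case
  proof (cases "ramsey_minimal r H G")
    case True then show ?thesis using subgraph_refl less.prems by blast
  next
    case False
    then obtain G' where G': "subgraph G' G" "G' \<noteq> G" "arrows G' H r"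
      using less.prems unfolding ramsey_minimal_def by blast
    have fv: "finite (verts G)" using less.prems unfolding is_graph_def by auto
    have fe: "finite (edges G)" using finite_edges less.prems by auto
    have sv: "verts G' \<subseteq> verts G" and se: "edges G' \<subseteq> edges G" using G' subgraph_def by auto
    have "verts G' \<noteq> verts G \<or> edges G' \<noteq> edges G"
      using G'(2) unfolding verts_def edges_def by (metis prod_eq_iff)
    then have "card (verts G') + card (edges G') < card (verts G) + card (edges G)"
    proof
      assume "verts G' \<noteq> verts G"
      then have "card (verts G') < card (verts G)" using sv fv by (simp add: psubset_card_mono psubsetI)
      moreover have "card (edges G') \<le> card (edges G)" using se fe card_mono by auto
      ultimately show ?thesis by simp
    next
      assume "edges G' \<noteq> edges G"
      then have "card (edges G') < card (edges G)" using se fe by (simp add: psubset_card_mono psubsetI)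
      moreover have "card (verts G') \<le> card (verts G)" using sv fv card_mono by auto
      ultimately show ?thesis by simp
    qed
    moreover have "is_graph G'" using G' subgraph_def by auto
    ultimately obtain G'' where "subgraph G'' G'" "ramsey_minimal r H G''"
      using less.hyps G'(3) by blast
    then show ?thesis using G'(1) subgraph_trans by blast
  qed
qed

lemma ramsey_exists:
  assumes "k \<ge> 2" "r \<ge> 1"
  shows "\<exists>G. ramsey_minimal r (complete_graph k) G"
proof -
  obtain N :: nat where N: "partn_lst {..<N} (replicate r k) 2" using ramsey_full[of "replicate r k" 2] by blast
  have g: "is_graph (complete_graph N)"
    unfolding is_graph_def complete_graph_def verts_def edges_def by auto
  have "arrows (complete_graph N) (complete_graph k) r"
    unfolding arrows_def
  proof (intro allI impI)
    fix c assume c: "\<forall>e\<in>edges (complete_graph N). c e < r"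
    have "c \<in> nsets {..<N} 2 \<rightarrow> {..<r}"
      using c unfolding complete_graph_def edges_def nsets_def by (auto simp: atLeast0LessThan)
    then obtain i Hs where i0: "i < length (replicate r k)" "Hs \<in> nsets {..<N} (replicate r k ! i)"
        "c ` (nsets Hs 2) \<subseteq> {i}"
      by (rule partn_lstE[OF N _ length_replicate])
    then have i: "i < r" "Hs \<in> nsets {..<N} k" "c ` (nsets Hs 2) \<subseteq> {i}" by simp_all
    have Hs: "finite Hs" "card Hs = k" "Hs \<subseteq> {..<N}" using i(2) unfolding nsets_def by auto
    obtain h where h: "bij_betw h {0..<k} Hs" using ex_bij_betw_nat_finite[OF Hs(1)] Hs(2) by auto
    have "mono_copy (complete_graph k) (complete_graph N) c i"
      unfolding mono_copy_def
    proof (intro exI[of _ h] conjI ballI)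
      show "inj_on h (verts (complete_graph k))" using h
        by (simp add: bij_betw_def complete_graph_def verts_def)
      show "h ` verts (complete_graph k) \<subseteq> verts (complete_graph N)" using h Hs
        by (auto simp: bij_betw_def complete_graph_def verts_def)
      fix e assume e: "e \<in> edges (complete_graph k)"
      then have e2: "e \<subseteq> {0..<k}" "card e = 2" by (auto simp: complete_graph_def edges_def)
      have inj: "inj_on h e" using h e2 by (meson bij_betw_def inj_on_subset)
      have ce: "card (h ` e) = 2" using card_image[OF inj] e2 by simp
      have sub: "h ` e \<subseteq> Hs" using h e2 by (auto simp: bij_betw_def)
      then show "h ` e \<in> edges (complete_graph N)" using ce Hs
        by (auto simp: complete_graph_def edges_def atLeast0LessThan)
      have "h ` e \<in> nsets Hs 2" using sub ce Hs(1) by (auto simp: nsets_def intro: finite_subset)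
      then show "c (h ` e) = i" using i(3) by auto
    qed
    then show "\<exists>i<r. mono_copy (complete_graph k) (complete_graph N) c i" using i by auto
  qed
  then show ?thesis using min_exists[OF g] by blast
qed

theorem mainTheorem10:
  fixes r k :: nat
  assumes "r \<ge> 3" and "k \<ge> 3"
  shows "s_r r (complete_graph k) \<ge> s_r (r - 1) (complete_graph k)"
proof -
  let ?K = "complete_graph k"
  obtain G1 where "ramsey_minimal r ?K G1" using ramsey_exists assms by fastforce
  then have ex: "\<exists>d. d \<in> min_degree ` {G. ramsey_minimal r ?K G}" by blast
  have "s_r r ?K \<in> min_degree ` {G. ramsey_minimal r ?K G}"
    unfolding s_r_def using LeastI_ex[OF ex] .
  then obtain G0 where G0: "ramsey_minimal r ?K G0" "s_r r ?K = min_degree G0" by auto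
  have gG0: "is_graph G0" and aG0: "arrows G0 ?K r" using G0 ramsey_minimal_def by auto
  have fv: "finite (verts G0)" using gG0 is_graph_def by auto
  have fe: "finite (edges G0)" using finite_edges gG0 by auto
  have ne: "verts G0 \<noteq> {}"
  proof
    assume "verts G0 = {}"
    have E0: "edges G0 = {}"
    proof (rule ccontr)
      assume "edges G0 \<noteq> {}"
      then obtain e where e: "e \<in> edges G0" by blast
      then have "e = {}" using edge_sub[OF gG0 e] \<open>verts G0 = {}\<close> by blast
      then show False using edge_card[OF gG0 e] by simp
    qed
    have "(\<forall>e\<in>edges G0. (\<lambda>_. 0::nat) e < r) \<longrightarrow> (\<exists>i<r. mono_copy ?K G0 (\<lambda>_. 0) i)"
      using aG0 unfolding arrows_def by (rule spec)
    then obtain i where "mono_copy ?K G0 (\<lambda>_. 0) i" using E0 by blast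
    then obtain f where f: "\<forall>e\<in>edges ?K. f ` e \<in> edges G0 \<and> (\<lambda>_. 0::nat) (f ` e) = i"
      unfolding mono_copy_def by blast
    have "{0,1::nat} \<subseteq> {0..<k}" using assms by auto
    moreover have "card {0,1::nat} = 2" by simp
    ultimately have "{0,1::nat} \<in> edges ?K" by (simp add: eK)
    then show False using f E0 by blast
  qed
  have "Min (degree G0 ` verts G0) \<in> degree G0 ` verts G0" using fv ne by (intro Min_in) auto
  then obtain v where v: "v \<in> verts G0" "degree G0 v = min_degree G0"
    unfolding min_degree_def by auto
  let ?D = "del_vertex G0 v"
  have "\<not> arrows ?D ?K r" using G0(1) del_vertex_sub[OF gG0] del_vertex_neq[OF v(1)]
    unfolding ramsey_minimal_def by blast
  then obtain c where c: "\<forall>e\<in>edges ?D. c e < r" "\<forall>i<r. \<not> mono_copy ?K ?D c i"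
    unfolding arrows_def by auto
  have gD: "is_graph ?D" using del_vertex_graph[OF gG0] .
  have eD: "e \<in> edges ?D \<longleftrightarrow> e \<in> edges G0 \<and> v \<notin> e" for e
    by (simp add: del_vertex_def edges_def)
  define H where "H = (verts G0, {e\<in>edges G0. v \<in> e \<or> c e < r - 1})"
  have eH: "e \<in> edges H \<longleftrightarrow> e \<in> edges G0 \<and> (v \<in> e \<or> c e < r - 1)" for e
    by (simp add: H_def edges_def)
  have gH: "is_graph H" using gG0 unfolding is_graph_def H_def verts_def edges_def by auto
  have subH: "subgraph H G0" using gH unfolding subgraph_def H_def verts_def edges_def by auto
  have aH: "arrows H ?K (r - 1)"
    unfolding arrows_def
  proof (intro allI impI)
    fix c' assume c': "\<forall>e\<in>edges H. c' e < r - 1"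
    define c'' where "c'' e = (if e \<in> edges H then c' e else c e)" for e
    have "\<forall>e\<in>edges G0. c'' e < r"
    proof
      fix e assume e: "e \<in> edges G0"
      show "c'' e < r"
      proof (cases "e \<in> edges H")
        case True then show ?thesis using c' by (auto simp: c''_def)
      next
        case False
        then have "e \<in> edges ?D" using e eH eD by blast
        then show ?thesis using c(1) False by (auto simp: c''_def)
      qed
    qed
    then obtain i where i: "i < r" "mono_copy ?K G0 c'' i" using aG0 unfolding arrows_def by blast
    show "\<exists>i<r - 1. mono_copy ?K H c' i"
    proof (cases "i = r - 1")
      case True
      have "\<forall>e\<in>edges G0. c'' e = i \<longrightarrow> e \<in> edges ?D \<and> c e = r - 1"
      proof (intro ballI impI)
        fix e assume e: "e \<in> edges G0" "c'' e = i"
        have "e \<notin> edges H"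
        proof
          assume "e \<in> edges H" then have "c' e < r - 1" using c' by auto
          then show False using e True by (auto simp: c''_def \<open>e \<in> edges H\<close>)
        qed
        then have "v \<notin> e" "\<not> c e < r - 1" "c e = i" using e eH by (auto simp: c''_def)
        moreover then have "e \<in> edges ?D" using e eD by auto
        moreover then have "c e < r" using c(1) by auto
        ultimately show "e \<in> edges ?D \<and> c e = r - 1" by auto
      qed
      then have "mono_copy ?K ?D c (r - 1)" using mono_transfer[OF i(2) _ gD] assms by auto
      then show ?thesis using c(2) assms by auto
    next
      case False
      have "\<forall>e\<in>edges G0. c'' e = i \<longrightarrow> e \<in> edges H \<and> c' e = i"
      proof (intro ballI impI)
        fix e assume e: "e \<in> edges G0" "c'' e = i"
        show "e \<in> edges H \<and> c' e = i"
        proof (cases "e \<in> edges H")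
          case True then show ?thesis using e by (auto simp: c''_def)
        next
          case F: False
          then have "\<not> c e < r - 1" using e eH by auto
          then show ?thesis using e F False i(1) by (auto simp: c''_def)
        qed
      qed
      then have "mono_copy ?K H c' i" using mono_transfer[OF i(2) _ gH] assms by auto
      moreover have "i < r - 1" using False i(1) by linarith
      ultimately show ?thesis by blast
    qed
  qed
  obtain H' where H': "subgraph H' H" "ramsey_minimal (r - 1) ?K H'"
    using min_exists[OF gH aH] by blast
  have aH': "arrows H' ?K (r - 1)" and gH': "is_graph H'" using H'(2) ramsey_minimal_def by auto
  have seH': "edges H' \<subseteq> edges H" using H'(1) subgraph_def by auto
  have "\<exists>e\<in>edges H'. v \<in> e"
  proof (rule ccontr)
    assume nv: "\<not> (\<exists>e\<in>edges H'. v \<in> e)"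
    have "\<forall>e\<in>edges H'. c e < r - 1" using nv seH' eH by blast
    then obtain i where i: "i < r - 1" "mono_copy ?K H' c i" using aH' unfolding arrows_def by blast
    have "\<forall>e\<in>edges H'. c e = i \<longrightarrow> e \<in> edges ?D \<and> c e = i" using nv seH' eH eD by blast
    then have "mono_copy ?K ?D c i" using mono_transfer[OF i(2) _ gD] assms by auto
    then show False using c(2) i(1) by auto
  qed
  then obtain e where e: "e \<in> edges H'" "v \<in> e" by blast
  have vH': "v \<in> verts H'" using edge_sub[OF gH' e(1)] e(2) by blast
  have fvH': "finite (verts H')" using gH' is_graph_def by auto
  have "min_degree H' \<le> degree H' v"
    unfolding min_degree_def using vH' fvH' by simp
  also have "degree H' v \<le> degree G0 v"
    unfolding degree_def using seH' subH fe unfolding subgraph_def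
    by (intro card_mono) (auto intro: finite_subset)
  finally have "min_degree H' \<le> s_r r ?K" using v G0 by simp
  moreover have "s_r (r - 1) ?K \<le> min_degree H'"
    unfolding s_r_def using H'(2) by (intro Least_le) blast
  ultimately show ?thesis by simp
qed

end
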